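(* Let $G=(V,E)$ be a finite simple undirected graph with distinct vertex IDs, whose neighborhood independence is at most a constant $c$, and let $K$ be a positive integer with $\delta(G)\ge K$. Suppose every vertex $v\in V$ selects the $K$ neighbors given by the operation $K$-Next-Modulo$(v,\Gamma(v),K)$. Then every vertex $v\in V$ is selected by at most $c\cdot K$ vertices.
   Context: $\Gamma(v)$ denotes the set of neighbors of $v$, $\deg(v)=|\Gamma(v)|$, and $\delta(G)=\min_{v}\deg(v)$. The neighborhood independence of $G$ is the maximum, over $v\in V$, of the size of an independent set of $G$ contained in $\Gamma(v)$. Operation $K$-Next-Modulo$(v,\Gamma(v),K)$: let $d=\deg(v)+1$ and let $u_1,u_2,\dots,u_d$ be the vertices of $\Gamma(v)\cup\{v\}$ listed in ascending order of ID, with $v=u_i$. Then $v$ selects the $K$ vertices $u_{i+1},u_{i+2},\dots,u_{i+K}$, indices taken cyclically modulo $d$; that is, the $K$ neighbors that immediately follow $v$ in the circular ordering of $\Gamma(v)\cup\{v\}$ by ID. All vertices make their selections simultaneously, in one round. *)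

theory Defs
  imports Main
begin

definition simple_graph :: "'a set \<Rightarrow> ('a \<Rightarrow> 'a \<Rightarrow> bool) \<Rightarrow> bool" where
  "simple_graph V E \<longleftrightarrow> finite V \<and> (\<forall>u v. E u v \<longrightarrow> u \<in> V \<and> v \<in> V)
     \<and> (\<forall>u v. E u v \<longrightarrow> E v u) \<and> (\<forall>v. \<not> E v v)"

definition nbhd :: "'a set \<Rightarrow> ('a \<Rightarrow> 'a \<Rightarrow> bool) \<Rightarrow> 'a \<Rightarrow> 'a set" where
  "nbhd V E v = {u \<in> V. E v u}"

definition deg :: "'a set \<Rightarrow> ('a \<Rightarrow> 'a \<Rightarrow> bool) \<Rightarrow> 'a \<Rightarrow> nat" where
  "deg V E v = card (nbhd V E v)"

definition min_degree :: "'a set \<Rightarrow> ('a \<Rightarrow> 'a \<Rightarrow> bool) \<Rightarrow> nat" where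
  "min_degree V E = Min (deg V E ` V)"

definition independent :: "('a \<Rightarrow> 'a \<Rightarrow> bool) \<Rightarrow> 'a set \<Rightarrow> bool" where
  "independent E S \<longleftrightarrow> (\<forall>u\<in>S. \<forall>w\<in>S. \<not> E u w)"

definition nbhd_indep_le :: "'a set \<Rightarrow> ('a \<Rightarrow> 'a \<Rightarrow> bool) \<Rightarrow> nat \<Rightarrow> bool" where
  "nbhd_indep_le V E c \<longleftrightarrow>
     (\<forall>v\<in>V. \<forall>S. S \<subseteq> nbhd V E v \<and> independent E S \<longrightarrow> card S \<le> c)"

(* Gamma(v) \<union> {v} listed in ascending order of ID *)
definition closed_nbhd_list ::
  "'a set \<Rightarrow> ('a \<Rightarrow> 'a \<Rightarrow> bool) \<Rightarrow> ('a \<Rightarrow> nat) \<Rightarrow> 'a \<Rightarrow> 'a list" where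
  "closed_nbhd_list V E ident v =
     (let N = insert v (nbhd V E v) in
      map (inv_into N ident) (sorted_list_of_set (ident ` N)))"

(* K-Next-Modulo(v, Gamma(v), K): the K vertices following v cyclically in that list *)
definition next_modulo ::
  "'a set \<Rightarrow> ('a \<Rightarrow> 'a \<Rightarrow> bool) \<Rightarrow> ('a \<Rightarrow> nat) \<Rightarrow> nat \<Rightarrow> 'a \<Rightarrow> 'a set" where
  "next_modulo V E ident K v =
     (let xs = closed_nbhd_list V E ident v; d = length xs; i = (THE i. i < d \<and> xs ! i = v) in
      {xs ! ((i + j) mod d) | j. 1 \<le> j \<and> j \<le> K})"

end

theory Submission
  imports Defs
begin

lemma greedy:
  fixes T :: "'a set" and r :: "'a \<Rightarrow> nat"
  assumes "finite T" "inj_on r T" "\<forall>x. \<not> E x x" "\<forall>x y. E x y \<longrightarrow> E y x"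
    "\<forall>u\<in>T. card {w\<in>T. E u w \<and> r u < r w} < K"
  shows "\<exists>I\<subseteq>T. (\<forall>x\<in>I. \<forall>y\<in>I. \<not> E x y) \<and> card T \<le> K * card I"
  using assms
proof (induction "card T" arbitrary: T rule: less_induct)
  case less
  show ?case
  proof (cases "T = {}")
    case True then show ?thesis by auto
  next
    case False
    define m where "m = Min (r ` T)"
    have "m \<in> r ` T" unfolding m_def using False less.prems(1) by simp
    then obtain u where u: "u \<in> T" "r u = m" by auto
    have umin: "\<forall>w\<in>T. w \<noteq> u \<longrightarrow> r u < r w"
    proof (intro ballI impI)
      fix w assume w: "w \<in> T" "w \<noteq> u"
      have "r u \<le> r w" using u w less.prems(1) unfolding m_def by simp
      moreover have "r u \<noteq> r w" using less.prems(2) u w by (metis inj_on_contraD)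
      ultimately show "r u < r w" by simp
    qed
    define L where "L = {w\<in>T. E u w \<and> r u < r w}"
    define T' where "T' = T - insert u L"
    have sub: "insert u L \<subseteq> T" using u unfolding L_def by auto
    have fin: "finite T'" using less.prems(1) unfolding T'_def by simp
    have cardT: "card T = card T' + card (insert u L)"
      unfolding T'_def using card_Diff_subset[OF finite_subset[OF sub less.prems(1)] sub]
        card_mono[OF less.prems(1) sub] by simp
    have cL: "card L < K" using less.prems(5) u unfolding L_def by auto
    have finL: "finite L" using less.prems(1) unfolding L_def by simp
    have "card (insert u L) \<le> Suc (card L)" using finL by (simp add: card_insert_if)
    then have cL2: "card (insert u L) \<le> K" using cL by simp
    have lt: "card T' < card T" using cardT u less.prems(1) unfolding L_def by (simp add: card_gt_0_iff)
    have "\<exists>I\<subseteq>T'. (\<forall>x\<in>I. \<forall>y\<in>I. \<not> E x y) \<and> card T' \<le> K * card I"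
    proof (rule less.hyps[OF lt fin])
      show "inj_on r T'" using less.prems(2) unfolding T'_def by (rule inj_on_subset) auto
      show "\<forall>x. \<not> E x x" by fact
      show "\<forall>x y. E x y \<longrightarrow> E y x" by fact
      show "\<forall>u\<in>T'. card {w \<in> T'. E u w \<and> r u < r w} < K"
      proof
        fix x assume x: "x \<in> T'"
        have "card {w \<in> T'. E x w \<and> r x < r w} \<le> card {w \<in> T. E x w \<and> r x < r w}"
          by (rule card_mono) (use less.prems(1) in \<open>auto simp: T'_def\<close>)
        also have "\<dots> < K" using less.prems(5) x unfolding T'_def by auto
        finally show "card {w \<in> T'. E x w \<and> r x < r w} < K" .
      qed
    qed
    then obtain I where I: "I \<subseteq> T'" "\<forall>x\<in>I. \<forall>y\<in>I. \<not> E x y" "card T' \<le> K * card I" by blast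
    have uI: "u \<notin> I" using I(1) unfolding T'_def by auto
    have finI: "finite I" using I(1) fin finite_subset by blast
    have noadj: "\<forall>y\<in>I. \<not> E u y"
    proof
      fix y assume y: "y \<in> I"
      then have "y \<in> T" "y \<notin> L" "y \<noteq> u" using I(1) unfolding T'_def by auto
      then show "\<not> E u y" using umin unfolding L_def by auto
    qed
    show ?thesis
    proof (intro exI conjI)
      show "insert u I \<subseteq> T" using I(1) u unfolding T'_def by auto
      show "\<forall>x\<in>insert u I. \<forall>y\<in>insert u I. \<not> E x y"
        using I(2) noadj less.prems(3,4) by blast
      have "card (insert u I) = Suc (card I)" using uI finI by simp
      then show "card T \<le> K * card (insert u I)" using cardT cL2 I(3) by simp
    qed
  qed
qed

lemma idx:
  fixes i j d p b :: nat
  assumes "i < d" "1 \<le> j" "j < d" "p < d" "b = (i + j) mod d"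
    "(i < p \<and> p < b) \<or> (b < i \<and> (i < p \<or> p < b))"
  shows "\<exists>t. 1 \<le> t \<and> t < j \<and> p = (i + t) mod d"
proof (cases "i + j < d")
  case True
  then have b: "b = i + j" using assms by simp
  then have "i < p" "p < i + j" using assms by auto
  then show ?thesis by (intro exI[of _ "p - i"]) (use assms in auto)
next
  case False
  then have "(i + j) mod d = (i + j - d) mod d" using le_mod_geq by simp
  also have "\<dots> = i + j - d" using assms(1,3) by simp
  finally have b: "b = i + j - d" using assms(5) by simp
  show ?thesis
  proof (cases "i < p")
    case True
    then show ?thesis using False assms by (intro exI[of _ "p - i"]) auto
  next
    case nf: False
    then have "p < b" using assms b by auto
    then show ?thesis using False assms b
      by (intro exI[of _ "p + d - i"]) auto
  qed
qed

definition btw :: "nat \<Rightarrow> nat \<Rightarrow> nat \<Rightarrow> bool" where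
  "btw a b c \<longleftrightarrow> (a < c \<and> c < b) \<or> (b < a \<and> (a < c \<or> c < b))"

lemma list_props:
  assumes sg: "simple_graph V E" and inj: "inj_on ident V" and u: "u \<in> V"
  shows "length (closed_nbhd_list V E ident u) = card (insert u (nbhd V E u))"
    "set (closed_nbhd_list V E ident u) = insert u (nbhd V E u)"
    "\<forall>a b. a < b \<and> b < length (closed_nbhd_list V E ident u) \<longrightarrow>
        ident (closed_nbhd_list V E ident u ! a) < ident (closed_nbhd_list V E ident u ! b)"
    "distinct (closed_nbhd_list V E ident u)"
proof -
  define N where "N = insert u (nbhd V E u)"
  define xs where "xs = closed_nbhd_list V E ident u"
  define L where "L = sorted_list_of_set (ident ` N)"
  have NV: "N \<subseteq> V" using u unfolding N_def nbhd_def by auto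
  have finN: "finite N" using NV sg unfolding simple_graph_def using finite_subset by blast
  have injN: "inj_on ident N" using inj NV inj_on_subset by blast
  have xs: "xs = map (inv_into N ident) L"
    unfolding xs_def closed_nbhd_list_def L_def N_def Let_def by simp
  have setL: "set L = ident ` N" unfolding L_def using finN by simp
  have sortL: "sorted_wrt (<) L" unfolding L_def by simp
  have lenL: "length L = card N" unfolding L_def using finN injN by (simp add: card_image)
  show len: "length (closed_nbhd_list V E ident u) = card (insert u (nbhd V E u))"
    using lenL xs unfolding xs_def N_def by simp
  show "set (closed_nbhd_list V E ident u) = insert u (nbhd V E u)"
  proof -
    have "set xs = inv_into N ident ` ident ` N" using xs setL by simp
    also have "\<dots> = N" using injN by (rule inv_into_image_cancel) simp
    finally show ?thesis unfolding xs_def N_def .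
  qed
  have nth: "ident (xs ! k) = L ! k" if "k < length xs" for k
  proof -
    have "L ! k \<in> ident ` N" using that xs setL by (metis length_map nth_mem)
    then show ?thesis using that xs by (simp add: f_inv_into_f)
  qed
  have mono: "\<forall>a b. a < b \<and> b < length xs \<longrightarrow> ident (xs ! a) < ident (xs ! b)"
    using nth sortL xs by (simp add: sorted_wrt_nth_less)
  then show "\<forall>a b. a < b \<and> b < length (closed_nbhd_list V E ident u) \<longrightarrow>
        ident (closed_nbhd_list V E ident u ! a) < ident (closed_nbhd_list V E ident u ! b)"
    unfolding xs_def .
  have "distinct xs"
    unfolding distinct_conv_nth
  proof (intro allI impI)
    fix a b assume "a < length xs" "b < length xs" "a \<noteq> b"
    then show "xs ! a \<noteq> xs ! b" using mono
      by (metis less_irrefl nat_neq_iff)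
  qed
  then show "distinct (closed_nbhd_list V E ident u)" unfolding xs_def .
qed
lemma mono_iff:
  fixes a c d :: nat
  assumes "\<forall>a b. a < b \<and> b < d \<longrightarrow> (f a :: nat) < f b" "a < d" "c < d"
  shows "f a < f c \<longleftrightarrow> a < c"
proof
  assume "f a < f c"
  show "a < c"
  proof (rule ccontr)
    assume "\<not> a < c"
    then have "c < a \<or> c = a" by auto
    then show False using assms \<open>f a < f c\<close> by (metis less_asym less_irrefl)
  qed
next
  assume "a < c" then show "f a < f c" using assms by blast
qed

lemma sel:
  assumes sg: "simple_graph V E" and inj: "inj_on ident V" and u: "u \<in> V"
    and md: "min_degree V E \<ge> K" and sv: "v \<in> next_modulo V E ident K u"
  shows "E u v" "card {w\<in>V. E u w \<and> btw (ident u) (ident v) (ident w)} < K"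
proof -
  define xs where "xs = closed_nbhd_list V E ident u"
  define d where "d = length xs"
  define i where "i = (THE i. i < d \<and> xs ! i = u)"
  note lp = list_props[OF sg inj u, folded xs_def]
  have finV: "finite V" using sg unfolding simple_graph_def by simp
  have finNb: "finite (nbhd V E u)" using finV unfolding nbhd_def by simp
  have "u \<notin> nbhd V E u" using sg unfolding nbhd_def simple_graph_def by simp
  then have dd: "d = deg V E u + 1" using lp(1) finNb unfolding d_def deg_def by simp
  have "min_degree V E \<le> deg V E u" unfolding min_degree_def using finV u by simp
  then have Kd: "K < d" using md dd by simp
  have "\<exists>!i. i < d \<and> xs ! i = u" unfolding d_def using lp(2,4) distinct_Ex1 by fastforce
  then have i: "i < d" "xs ! i = u" unfolding i_def by (metis (mono_tags, lifting) theI')+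
  from sv obtain j where j: "1 \<le> j" "j \<le> K" "v = xs ! ((i + j) mod d)"
    unfolding next_modulo_def Let_def by (auto simp: xs_def d_def i_def)
  define b where "b = (i + j) mod d"
  have bd: "b < d" using i(1) unfolding b_def by simp
  have bi: "b \<noteq> i"
  proof (cases "i + j < d")
    case True then show ?thesis using j unfolding b_def by simp
  next
    case False
    then have "(i + j) mod d = (i + j - d) mod d" using le_mod_geq by simp
    also have "\<dots> = i + j - d" using i(1) Kd j(2) by simp
    finally show ?thesis using Kd j(2) False unfolding b_def by simp
  qed
  have vxs: "v = xs ! b" using j unfolding b_def by simp
  have "xs ! b \<noteq> xs ! i" using nth_eq_iff_index_eq[OF lp(4)] i bi bd unfolding d_def by blast
  then have "v \<noteq> u" using vxs i by simp
  moreover have "v \<in> set xs" using vxs bd unfolding d_def by simp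
  ultimately show "E u v" using lp(2) unfolding nbhd_def by auto
  have sub: "{w\<in>V. E u w \<and> btw (ident u) (ident v) (ident w)} \<subseteq> (\<lambda>t. xs ! ((i + t) mod d)) ` {1..<j}"
  proof
    fix w assume w: "w \<in> {w\<in>V. E u w \<and> btw (ident u) (ident v) (ident w)}"
    then have "w \<in> set xs" using lp(2) unfolding nbhd_def by auto
    then obtain p where p: "p < d" "w = xs ! p" unfolding d_def by (metis in_set_conv_nth)
    have mi: "ident (xs ! a) < ident (xs ! c) \<longleftrightarrow> a < c" if "a < d" "c < d" for a c
      using mono_iff[of d "\<lambda>k. ident (xs ! k)" a c] lp(3) that unfolding d_def by blast
    have "(i < p \<and> p < b) \<or> (b < i \<and> (i < p \<or> p < b))"
      using w unfolding btw_def p(2) vxs using mi[OF i(1) p(1)] mi[OF p(1) bd] mi[OF bd i(1)] i(2)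
      by auto
    from idx[OF i(1) j(1) _ p(1) b_def this] Kd j(2)
    obtain t where "1 \<le> t" "t < j" "p = (i + t) mod d" by auto
    then show "w \<in> (\<lambda>t. xs ! ((i + t) mod d)) ` {1..<j}" using p by auto
  qed
  have "card {w\<in>V. E u w \<and> btw (ident u) (ident v) (ident w)} \<le> card ((\<lambda>t. xs ! ((i + t) mod d)) ` {1..<j})"
    by (rule card_mono[OF _ sub]) simp
  also have "\<dots> \<le> card {1..<j}" by (rule card_image_le) simp
  also have "\<dots> < K" using j by simp
  finally show "card {w\<in>V. E u w \<and> btw (ident u) (ident v) (ident w)} < K" .
qed


theorem theorem1:
  fixes V :: "'a set" and E :: "'a \<Rightarrow> 'a \<Rightarrow> bool" and ident :: "'a \<Rightarrow> nat"
    and c K :: nat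
  assumes "simple_graph V E"
    and "V \<noteq> {}"
    and "inj_on ident V"
    and "nbhd_indep_le V E c"
    and "K > 0"
    and "min_degree V E \<ge> K"
  shows "\<forall>v\<in>V. card {u \<in> V. v \<in> next_modulo V E ident K u} \<le> c * K"
proof
  fix v assume v: "v \<in> V"
  define S where "S = {u \<in> V. v \<in> next_modulo V E ident K u}"
  have sg: "simple_graph V E" by fact
  have finV: "finite V" using sg unfolding simple_graph_def by simp
  have irr: "\<forall>x. \<not> E x x" and sym: "\<forall>x y. E x y \<longrightarrow> E y x"
    using sg unfolding simple_graph_def by auto
  have SV: "S \<subseteq> V" unfolding S_def by auto
  have finS: "finite S" using SV finV finite_subset by blast
  have Euv: "E u v" if "u \<in> S" for u
    using sel(1)[OF sg assms(3) _ assms(6)] that unfolding S_def by auto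
  have Snb: "S \<subseteq> nbhd V E v" using Euv sym SV unfolding nbhd_def by auto
  define B where "B = Suc (Max (ident ` V))"
  have idB: "ident x < B" if "x \<in> V" for x
    unfolding B_def using finV that by (simp add: le_imp_less_Suc)
  define r where "r w = (if ident v < ident w then ident w else ident w + B)" for w
  have injr: "inj_on r S"
  proof (rule inj_onI)
    fix x y assume xy: "x \<in> S" "y \<in> S" "r x = r y"
    have "x \<in> V" "y \<in> V" using xy SV by auto
    then have bx: "ident x < B" "ident y < B" using idB by auto
    have "ident x = ident y"
    proof (cases "ident v < ident x"; cases "ident v < ident y")
    qed (use xy(3) bx in \<open>simp_all add: r_def\<close>)
    then show "x = y" using assms(3) \<open>x \<in> V\<close> \<open>y \<in> V\<close> by (meson inj_onD)
  qed
  have idne: "ident w \<noteq> ident v" if "w \<in> S" for w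
  proof
    assume "ident w = ident v"
    then have "w = v" using assms(3) that SV v by (meson inj_onD subsetD)
    then show False using Euv[OF that] irr by simp
  qed
  have cnt: "\<forall>u\<in>S. card {w\<in>S. E u w \<and> r u < r w} < K"
  proof
    fix u assume u: "u \<in> S"
    have "{w\<in>S. E u w \<and> r u < r w} \<subseteq> {w\<in>V. E u w \<and> btw (ident u) (ident v) (ident w)}"
    proof
      fix w assume w: "w \<in> {w\<in>S. E u w \<and> r u < r w}"
      then have wS: "w \<in> S" "E u w" "r u < r w" by auto
      have "w \<in> V" "u \<in> V" using wS u SV by auto
      then have "ident w < B" "ident u < B" using idB by auto
      then have "btw (ident u) (ident v) (ident w)"
      proof (cases "ident v < ident u"; cases "ident v < ident w")
      qed (use idne[OF u] idne[OF wS(1)] wS(3) in \<open>simp_all add: r_def btw_def\<close>)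
      then show "w \<in> {w\<in>V. E u w \<and> btw (ident u) (ident v) (ident w)}"
        using wS \<open>w \<in> V\<close> by auto
    qed
    then have "card {w\<in>S. E u w \<and> r u < r w} \<le> card {w\<in>V. E u w \<and> btw (ident u) (ident v) (ident w)}"
      using finV by (intro card_mono) auto
    also have "\<dots> < K"
      using sel(2)[OF sg assms(3) _ assms(6)] u unfolding S_def by auto
    finally show "card {w\<in>S. E u w \<and> r u < r w} < K" .
  qed
  obtain I where I: "I \<subseteq> S" "\<forall>x\<in>I. \<forall>y\<in>I. \<not> E x y" "card S \<le> K * card I"
    using greedy[OF finS injr irr sym cnt] by blast
  have "I \<subseteq> nbhd V E v" "independent E I" using I(1,2) Snb unfolding independent_def by auto
  then have "card I \<le> c" using assms(4) v unfolding nbhd_indep_le_def by blast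
  then have "card S \<le> K * c" using I(3) by (meson le_trans mult_le_mono2)
  then show "card {u \<in> V. v \<in> next_modulo V E ident K u} \<le> c * K"
    unfolding S_def by (simp add: mult.commute)
qed

end
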